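(* Let $A$ be a complete Noetherian local ring with maximal ideal $\mathfrak m$, $M$ a finitely generated $A$-module, $M_n=M\otimes_AA/\mathfrak m^n$, and $G_n=\operatorname{Aut}_A(M_n)$, with the natural reduction homomorphisms $G_{n+1}\to G_n$. Then the inverse system $(G_n)_{n\ge1}$ satisfies the Mittag-Leffler condition: for each $n\ge1$ there is $N\ge n$ such that the images of $G_i$ and $G_j$ in $G_n$ coincide for all $i,j\ge N$. *)

theory Defs
  imports Main "HOL.Modules"
begin

definition is_ideal :: "'a::comm_ring_1 set \<Rightarrow> bool" where
  "is_ideal I \<longleftrightarrow> 0 \<in> I \<and> (\<forall>x\<in>I. \<forall>y\<in>I. x + y \<in> I) \<and> (\<forall>r x. x \<in> I \<longrightarrow> r * x \<in> I)"

definition ideal_gen :: "'a::comm_ring_1 set \<Rightarrow> 'a set" where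
  "ideal_gen F = {(\<Sum>a\<in>t. r a * a) | t r. finite t \<and> t \<subseteq> F}"

definition maximal_ideal :: "'a::comm_ring_1 set \<Rightarrow> bool" where
  "maximal_ideal m \<longleftrightarrow> is_ideal m \<and> m \<noteq> UNIV \<and>
     (\<forall>I. is_ideal I \<and> m \<subseteq> I \<longrightarrow> I = m \<or> I = UNIV)"

definition local_ring_with :: "'a::comm_ring_1 set \<Rightarrow> bool" where
  "local_ring_with m \<longleftrightarrow> maximal_ideal m \<and> (\<forall>I. maximal_ideal I \<longrightarrow> I = m)"

definition noetherian_ring :: "'a::comm_ring_1 itself \<Rightarrow> bool" where
  "noetherian_ring _ \<longleftrightarrow> (\<forall>I::'a set. is_ideal I \<longrightarrow> (\<exists>F. finite F \<and> F \<subseteq> I \<and> ideal_gen F = I))"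

fun ideal_pow :: "'a::comm_ring_1 set \<Rightarrow> nat \<Rightarrow> 'a set" where
  "ideal_pow m 0 = UNIV"
| "ideal_pow m (Suc n) = ideal_gen {x * y | x y. x \<in> ideal_pow m n \<and> y \<in> m}"

definition adically_complete :: "'a::comm_ring_1 set \<Rightarrow> bool" where
  "adically_complete m \<longleftrightarrow>
     (\<Inter>n. ideal_pow m n) = {0} \<and>
     (\<forall>x::nat \<Rightarrow> 'a. (\<forall>k. \<exists>N. \<forall>i\<ge>N. \<forall>j\<ge>N. x i - x j \<in> ideal_pow m k)
        \<longrightarrow> (\<exists>y. \<forall>k. \<exists>N. \<forall>i\<ge>N. y - x i \<in> ideal_pow m k))"

(* submodule generated by F (literal unfolding of Modules.module.span) *)
definition submod_gen :: "('a::comm_ring_1 \<Rightarrow> 'b::ab_group_add \<Rightarrow> 'b) \<Rightarrow> 'b set \<Rightarrow> 'b set" where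
  "submod_gen s F = {(\<Sum>a\<in>t. s (r a) a) | t r. finite t \<and> t \<subseteq> F}"

definition fin_gen_module :: "('a::comm_ring_1 \<Rightarrow> 'b::ab_group_add \<Rightarrow> 'b) \<Rightarrow> bool" where
  "fin_gen_module s \<longleftrightarrow> (\<exists>F. finite F \<and> submod_gen s F = UNIV)"

definition IM :: "('a::comm_ring_1 \<Rightarrow> 'b::ab_group_add \<Rightarrow> 'b) \<Rightarrow> 'a set \<Rightarrow> nat \<Rightarrow> 'b set" where
  "IM s m n = submod_gen s {s a x | a x. a \<in> ideal_pow m n}"

(* coset x + m^n M, an element of M_n = M / m^n M  (= M \<otimes>_A A/m^n) *)
definition cos :: "('a::comm_ring_1 \<Rightarrow> 'b::ab_group_add \<Rightarrow> 'b) \<Rightarrow> 'a set \<Rightarrow> nat \<Rightarrow> 'b \<Rightarrow> 'b set" where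
  "cos s m n x = (\<lambda>y. x + y) ` IM s m n"

definition Mq :: "('a::comm_ring_1 \<Rightarrow> 'b::ab_group_add \<Rightarrow> 'b) \<Rightarrow> 'a set \<Rightarrow> nat \<Rightarrow> 'b set set" where
  "Mq s m n = range (cos s m n)"

(* G_n = Aut_A(M_n): A-linear bijections of M_n (extensional: {} outside M_n) *)
definition AutM :: "('a::comm_ring_1 \<Rightarrow> 'b::ab_group_add \<Rightarrow> 'b) \<Rightarrow> 'a set \<Rightarrow> nat \<Rightarrow> ('b set \<Rightarrow> 'b set) set" where
  "AutM s m n = {g. bij_betw g (Mq s m n) (Mq s m n) \<and>
     (\<forall>X. X \<notin> Mq s m n \<longrightarrow> g X = {}) \<and>
     (\<forall>x y. g (cos s m n (x + y)) = (\<lambda>(u,v). u + v) ` (g (cos s m n x) \<times> g (cos s m n y))) \<and>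
     (\<forall>a x z. g (cos s m n x) = cos s m n z \<longrightarrow> g (cos s m n (s a x)) = cos s m n (s a z))}"

(* image of G_i in G_n under the composite reduction map G_i \<rightarrow> G_n (i \<ge> n):
   h is the reduction of g iff h(x mod m^n M) = y mod m^n M whenever g(x mod m^i M) = y mod m^i M *)
definition red_image :: "('a::comm_ring_1 \<Rightarrow> 'b::ab_group_add \<Rightarrow> 'b) \<Rightarrow> 'a set \<Rightarrow> nat \<Rightarrow> nat \<Rightarrow> ('b set \<Rightarrow> 'b set) set" where
  "red_image s m i n = {h \<in> AutM s m n. \<exists>g \<in> AutM s m i.
      \<forall>x y. g (cos s m i x) = cos s m i y \<longrightarrow> h (cos s m n x) = cos s m n y}"

end

theory Submission
  imports Defs "HOL-Library.Function_Algebras"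
begin


definition ssum :: "'c::ab_group_add set \<Rightarrow> 'c set \<Rightarrow> 'c set" where
  "ssum X Y = {x + y | x y. x \<in> X \<and> y \<in> Y}"

definition chainU :: "(nat \<Rightarrow> 'c set) \<Rightarrow> bool" where
  "chainU U \<longleftrightarrow> (\<forall>t. U t \<subseteq> U (Suc t)) \<or> (\<forall>t. U (Suc t) \<subseteq> U t)"

definition evconst :: "(nat \<Rightarrow> 'c) \<Rightarrow> bool" where
  "evconst U \<longleftrightarrow> (\<exists>N. \<forall>t\<ge>N. U t = U N)"

definition mP :: "('a::comm_ring_1 \<Rightarrow> 'c::ab_group_add \<Rightarrow> 'c) \<Rightarrow> 'a set \<Rightarrow> 'c set \<Rightarrow> 'c set" where
  "mP sc I P = module.span sc {sc a x | a x. a \<in> I \<and> x \<in> P}"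

lemma chainU_le:
  assumes "chainU U" "t \<le> t'"
  shows "U t \<subseteq> U t' \<or> U t' \<subseteq> U t"
  using assms(1) unfolding chainU_def
proof
  assume "\<forall>t. U t \<subseteq> U (Suc t)" then show ?thesis using lift_Suc_mono_le[of U, OF _ assms(2)] by blast
next
  assume "\<forall>t. U (Suc t) \<subseteq> U t" then show ?thesis using lift_Suc_antimono_le[of U, OF _ assms(2)] by blast
qed

lemma chainU_inter: "chainU U \<Longrightarrow> chainU (\<lambda>t. U t \<inter> K)"
  unfolding chainU_def by blast

lemma chainU_ssum: "chainU U \<Longrightarrow> chainU (\<lambda>t. ssum (U t) K)"
  unfolding chainU_def ssum_def by blast

lemma evconst_two:
  assumes "chainU V" "\<And>t. V t = A \<or> V t = B"
  shows "evconst V"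
proof (cases "\<forall>t. V t = V 0")
  case True then show ?thesis unfolding evconst_def by (intro exI[of _ 0]) auto
next
  case False
  then obtain t where t: "V t \<noteq> V 0" by auto
  have "\<forall>t'\<ge>t. V t' = V t"
  proof (intro allI impI)
    fix t' assume "t \<le> t'"
    have "V t' \<noteq> V 0"
    proof
      assume h: "V t' = V 0"
      have "V 0 \<subseteq> V t \<and> V t \<subseteq> V t' \<or> V t \<subseteq> V 0 \<and> V t' \<subseteq> V t"
        using assms(1) unfolding chainU_def
      proof
        assume "\<forall>t. V t \<subseteq> V (Suc t)" then show ?thesis
          using lift_Suc_mono_le[of V, OF _ `t \<le> t'`] lift_Suc_mono_le[of V 0 t] by blast
      next
        assume "\<forall>t. V (Suc t) \<subseteq> V t" then show ?thesis
          using lift_Suc_antimono_le[of V, OF _ `t \<le> t'`] lift_Suc_antimono_le[of V 0 t] by blast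
      qed
      then show False using h t by auto
    qed
    then show "V t' = V t" using t assms(2)[of t] assms(2)[of t'] assms(2)[of 0] by auto
  qed
  then show ?thesis unfolding evconst_def by blast
qed

lemma local_unit:
  assumes "maximal_ideal m" "a \<notin> m"
  shows "\<exists>r \<mu>. \<mu> \<in> m \<and> r * a + \<mu> = (1::'a::comm_ring_1)"
proof -
  let ?I = "{r * a + \<mu> | r \<mu>. \<mu> \<in> m}"
  have im: "is_ideal m" using assms(1) unfolding maximal_ideal_def by auto
  have "is_ideal ?I"
    unfolding is_ideal_def
  proof (intro conjI ballI allI impI)
    show "0 \<in> ?I" using im unfolding is_ideal_def by (auto intro!: exI[of _ 0])
  next
    fix x y assume "x \<in> ?I" "y \<in> ?I"
    then obtain r1 u1 r2 u2 where "x = r1 * a + u1" "y = r2 * a + u2" "u1 \<in> m" "u2 \<in> m" by auto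
    moreover have "x + y = (r1 + r2) * a + (u1 + u2)" using \<open>x = _\<close> \<open>y = _\<close> by (simp add: algebra_simps)
    moreover have "u1 + u2 \<in> m" using im \<open>u1 \<in> m\<close> \<open>u2 \<in> m\<close> unfolding is_ideal_def by blast
    ultimately show "x + y \<in> ?I" by blast
  next
    fix r x assume "x \<in> ?I"
    then obtain r1 u1 where "x = r1 * a + u1" "u1 \<in> m" by auto
    moreover have "r * x = (r * r1) * a + r * u1" using \<open>x = _\<close> by (simp add: algebra_simps)
    moreover have "r * u1 \<in> m" using im \<open>u1 \<in> m\<close> unfolding is_ideal_def by blast
    ultimately show "r * x \<in> ?I" by blast
  qed
  moreover have "m \<subseteq> ?I"
  proof
    fix x assume "x \<in> m" moreover have "x = 0 * a + x" by simp
    ultimately show "x \<in> ?I" by blast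
  qed
  ultimately have disj: "?I = m \<or> ?I = UNIV" using assms(1) unfolding maximal_ideal_def by blast
  have aI: "a \<in> ?I"
  proof -
    have "a = 1 * a + 0" by simp
    moreover have "(0::'a) \<in> m" using im unfolding is_ideal_def by simp
    ultimately show ?thesis by blast
  qed
  have "?I \<noteq> m" using aI assms(2) by blast
  then have "?I = UNIV" using disj by blast
  then have "(1::'a) \<in> ?I" by (simp only: UNIV_I)
  then obtain r \<mu> where "1 = r * a + \<mu>" "\<mu> \<in> m" by blast
  then show ?thesis by (intro exI[of _ r] exI[of _ \<mu>]) simp
qed

lemma is_ideal_gen: "is_ideal (ideal_gen F)"
  unfolding is_ideal_def ideal_gen_def
proof (intro conjI ballI allI impI)
  show "0 \<in> {\<Sum>a\<in>t. r a * a |t r. finite t \<and> t \<subseteq> F}"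
    by (auto intro!: exI[of _ "{}"])
next
  fix x y assume "x \<in> {\<Sum>a\<in>t. r a * a |t r. finite t \<and> t \<subseteq> F}" "y \<in> {\<Sum>a\<in>t. r a * a |t r. finite t \<and> t \<subseteq> F}"
  then obtain t1 r1 t2 r2 where h: "finite t1" "t1 \<subseteq> F" "finite t2" "t2 \<subseteq> F"
    "x = (\<Sum>a\<in>t1. r1 a * a)" "y = (\<Sum>a\<in>t2. r2 a * a)" by auto
  define r where "r a = (if a \<in> t1 then r1 a else 0) + (if a \<in> t2 then r2 a else 0)" for a
  have "(\<Sum>a\<in>t1 \<union> t2. r a * a) = (\<Sum>a\<in>t1 \<union> t2. (if a \<in> t1 then r1 a * a else 0) + (if a \<in> t2 then r2 a * a else 0))"
    by (rule sum.cong) (auto simp: r_def algebra_simps)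
  also have "\<dots> = (\<Sum>a\<in>t1 \<union> t2. (if a \<in> t1 then r1 a * a else 0)) + (\<Sum>a\<in>t1 \<union> t2. (if a \<in> t2 then r2 a * a else 0))"
    by (rule sum.distrib)
  also have "\<dots> = x + y" using h by (simp add: sum.If_cases Int_absorb1)
  finally show "x + y \<in> {\<Sum>a\<in>t. r a * a |t r. finite t \<and> t \<subseteq> F}"
    using h by (auto intro!: exI[of _ "t1 \<union> t2"] exI[of _ r])
next
  fix c x assume "x \<in> {\<Sum>a\<in>t. r a * a |t r. finite t \<and> t \<subseteq> F}"
  then obtain t r where h: "finite t" "t \<subseteq> F" "x = (\<Sum>a\<in>t. r a * a)" by auto
  then show "c * x \<in> {\<Sum>a\<in>t. r a * a |t r. finite t \<and> t \<subseteq> F}"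
    by (auto intro!: exI[of _ t] exI[of _ "\<lambda>a. c * r a"] simp: sum_distrib_left mult.assoc)
qed

lemma ideal_gen_sub: "F \<subseteq> ideal_gen F"
proof
  fix x assume "x \<in> F" then show "x \<in> ideal_gen F"
    unfolding ideal_gen_def by (auto intro!: exI[of _ "{x}"] exI[of _ "\<lambda>_. 1"])
qed

lemma ideal_gen_min: assumes "is_ideal I" "F \<subseteq> I" shows "ideal_gen F \<subseteq> I"
proof
  fix x assume "x \<in> ideal_gen F"
  then obtain t r where h: "finite t" "t \<subseteq> F" "x = (\<Sum>a\<in>t. r a * a)" unfolding ideal_gen_def by auto
  have "(\<Sum>a\<in>t. r a * a) \<in> I" using h(1,2)
  proof (induction t rule: finite_induct)
    case empty then show ?case using assms(1) unfolding is_ideal_def by simp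
  next
    case (insert x t) then show ?case using assms unfolding is_ideal_def by auto
  qed
  then show "x \<in> I" using h by simp
qed

lemma is_ideal_UNIV: "is_ideal (UNIV::'a::comm_ring_1 set)" unfolding is_ideal_def by auto

lemma is_ideal_pow: "is_ideal (ideal_pow m n)"
  by (cases n) (auto simp: is_ideal_UNIV is_ideal_gen)

lemma pow_mult: assumes "x \<in> ideal_pow m n" "y \<in> m" shows "x * y \<in> ideal_pow m (Suc n)"
proof -
  have "x * y \<in> {x * y |x y. x \<in> ideal_pow m n \<and> y \<in> m}" using assms by blast
  then show ?thesis by (simp only: ideal_pow.simps) (rule subsetD[OF ideal_gen_sub])
qed

lemma pow_Suc_sub: "ideal_pow m (Suc n) \<subseteq> ideal_pow m n"
proof -
  have "{x * y |x y. x \<in> ideal_pow m n \<and> y \<in> m} \<subseteq> ideal_pow m n"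
    using is_ideal_pow[of m n] unfolding is_ideal_def by (auto, metis mult.commute)
  then show ?thesis using ideal_gen_min[OF is_ideal_pow[of m n]] by simp
qed

lemma pow_anti: "n \<le> n' \<Longrightarrow> ideal_pow m n' \<subseteq> ideal_pow m n"
  by (induction n' rule: dec_induct) (use pow_Suc_sub in auto)

context module
begin

lemma subspace_ssum: assumes A: "subspace A" and B: "subspace B" shows "subspace (ssum A B)"
  unfolding subspace_def
proof (intro conjI ballI allI)
  show "0 \<in> ssum A B" unfolding ssum_def using subspace_0[OF A] subspace_0[OF B]
    by (intro CollectI exI[of _ 0]) simp
next
  fix x y assume "x \<in> ssum A B" "y \<in> ssum A B"
  then obtain a b a' b' where h: "x = a + b" "y = a' + b'" "a \<in> A" "b \<in> B" "a' \<in> A" "b' \<in> B"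
    unfolding ssum_def by blast
  have "x + y = (a + a') + (b + b')" using h by (simp add: algebra_simps)
  moreover have "a + a' \<in> A" "b + b' \<in> B" using h subspace_add A B by auto
  ultimately show "x + y \<in> ssum A B" unfolding ssum_def by blast
next
  fix c x assume "x \<in> ssum A B"
  then obtain a b where h: "x = a + b" "a \<in> A" "b \<in> B" unfolding ssum_def by blast
  have "c *s x = c *s a + c *s b" using h by (simp add: algebra_simps)
  moreover have "c *s a \<in> A" "c *s b \<in> B" using h subspace_scale A B by auto
  ultimately show "c *s x \<in> ssum A B" unfolding ssum_def by blast
qed

lemma ssum_sub: "subspace C \<Longrightarrow> A \<subseteq> C \<Longrightarrow> B \<subseteq> C \<Longrightarrow> ssum A B \<subseteq> C"
  unfolding ssum_def using subspace_add by blast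

lemma ssum_left: "0 \<in> B \<Longrightarrow> A \<subseteq> ssum A B"
  unfolding ssum_def by force

lemma ssum_right: "0 \<in> A \<Longrightarrow> B \<subseteq> ssum A B"
  unfolding ssum_def by force

lemma modular_eq:
  assumes "subspace A" "subspace B" "subspace K" "A \<subseteq> B" "A \<inter> K = B \<inter> K" "ssum A K = ssum B K"
  shows "A = B"
proof -
  have "B \<subseteq> A"
  proof
    fix x assume x: "x \<in> B"
    then have "x \<in> ssum A K" using assms(6) ssum_left[OF subspace_0[OF assms(3)]] by blast
    then obtain a k where ak: "x = a + k" "a \<in> A" "k \<in> K" unfolding ssum_def by auto
    then have "k = x - a" by simp
    then have "k \<in> B" using x ak assms(4) subspace_diff[OF assms(2)] by blast
    then have "k \<in> A" using ak assms(5) by blast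
    then show "x \<in> A" using ak subspace_add[OF assms(1)] by auto
  qed
  then show ?thesis using assms(4) by auto
qed

lemma evconst_split:
  assumes "chainU U" "\<And>t. subspace (U t)" "subspace K"
    "evconst (\<lambda>t. U t \<inter> K)" "evconst (\<lambda>t. ssum (U t) K)"
  shows "evconst U"
proof -
  obtain N1 where N1: "\<forall>t\<ge>N1. U t \<inter> K = U N1 \<inter> K" using assms(4) unfolding evconst_def by auto
  obtain N2 where N2: "\<forall>t\<ge>N2. ssum (U t) K = ssum (U N2) K" using assms(5) unfolding evconst_def by auto
  define N where "N = max N1 N2"
  have "\<forall>t\<ge>N. U t = U N"
  proof (intro allI impI)
    fix t assume "N \<le> t"
    have "N1 \<le> t" "N1 \<le> N" "N2 \<le> t" "N2 \<le> N" using `N \<le> t` unfolding N_def by auto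
    then have i: "U t \<inter> K = U N \<inter> K" using N1 by metis
    have s: "ssum (U t) K = ssum (U N) K" using N2 `N2 \<le> t` `N2 \<le> N` by metis
    from chainU_le[OF assms(1) `N \<le> t`]
    show "U t = U N"
      using modular_eq[OF assms(2)[of t] assms(2)[of N] assms(3) _ i s]
            modular_eq[OF assms(2)[of N] assms(2)[of t] assms(3) _ i[symmetric] s[symmetric]] by auto
  qed
  then show ?thesis unfolding evconst_def by blast
qed


lemma subspace_scale_pre: "subspace S \<Longrightarrow> subspace {x. a *s x \<in> S}"
proof -
  assume S: "subspace S"
  show ?thesis unfolding subspace_def
  proof (intro conjI ballI allI)
    show "0 \<in> {x. a *s x \<in> S}" using subspace_0[OF S] by simp
  next
    fix x y assume "x \<in> {x. a *s x \<in> S}" "y \<in> {x. a *s x \<in> S}"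
    then show "x + y \<in> {x. a *s x \<in> S}" using subspace_add[OF S] by (simp add: scale_right_distrib)
  next
    fix c x assume "x \<in> {x. a *s x \<in> S}"
    then have h: "a *s x \<in> S" by simp
    have "c *s (a *s x) \<in> S" using h by (rule subspace_scale[OF S])
    then show "c *s x \<in> {x. a *s x \<in> S}" by (simp only: scale_left_commute[of a c x] mem_Collect_eq)
  qed
qed

lemma one_dim:
  assumes mx: "maximal_ideal m"
    and C: "subspace C" and V: "subspace V"
    and D'def: "D' = ssum C (span G)" and Ddef: "D = ssum C (span (insert g G))"
    and mD: "\<forall>a\<in>m. \<forall>x\<in>D. a *s x \<in> C"
    and sub1: "D' \<subseteq> V" and sub2: "V \<subseteq> D"
  shows "V = D' \<or> V = D"
proof (cases "V \<subseteq> D'")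
  case True then show ?thesis using sub1 by auto
next
  case False
  then obtain x where x: "x \<in> V" "x \<notin> D'" by auto
  then have "x \<in> D" using sub2 by auto
  then obtain c y where cy: "x = c + y" "c \<in> C" "y \<in> span (insert g G)" using Ddef unfolding ssum_def by auto
  then obtain a where a: "y - a *s g \<in> span G" using span_insert by auto
  have gD: "g \<in> D"
  proof -
    have "g = 0 + g" by simp
    moreover have "g \<in> span (insert g G)" by (rule span_base) simp
    ultimately show ?thesis using Ddef subspace_0[OF C] unfolding ssum_def by blast
  qed
  have D'sub: "subspace D'" using D'def subspace_ssum[OF C subspace_span] by simp
  have CD': "C \<subseteq> D'" using D'def ssum_left[OF span_zero] by simp
  have d: "c + (y - a *s g) \<in> D'" using D'def cy a unfolding ssum_def by blast
  have ag: "x = a *s g + (c + (y - a *s g))" using cy by simp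
  have "a \<notin> m"
  proof
    assume "a \<in> m" then have "a *s g \<in> C" using mD gD by auto
    then have "a *s g \<in> D'" using CD' by auto
    then have "a *s g + (c + (y - a *s g)) \<in> D'" using d by (rule subspace_add[OF D'sub])
    then have "x \<in> D'" by (simp only: ag[symmetric])
    then show False using x by simp
  qed
  then obtain r \<mu> where r: "\<mu> \<in> m" "r * a + \<mu> = 1" using local_unit[OF mx] by blast
  have eqa: "a *s g = x - (c + (y - a *s g))" using cy by simp
  have "x - (c + (y - a *s g)) \<in> V" using x(1) d sub1 by (intro subspace_diff[OF V]) auto
  then have agV: "a *s g \<in> V" by (rule ssubst[OF eqa, where P="\<lambda>z. z \<in> V"])
  have "\<mu> *s g \<in> V" using mD gD r(1) CD' sub1 by auto
  moreover have "g = r *s (a *s g) + \<mu> *s g"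
  proof -
    have "g = (r * a + \<mu>) *s g" using r(2) by simp
    also have "\<dots> = r *s (a *s g) + \<mu> *s g" by (simp add: scale_left_distrib)
    finally show ?thesis .
  qed
  moreover have "r *s (a *s g) \<in> V" using agV by (rule subspace_scale[OF V])
  ultimately have gV: "g \<in> V" using subspace_add[OF V] by metis
  have "G \<subseteq> V" using D'def sub1 ssum_right[OF subspace_0[OF C]] span_superset[of G] by blast
  then have "span (insert g G) \<subseteq> V" using gV by (intro span_minimal V) auto
  moreover have "C \<subseteq> V" using CD' sub1 by auto
  ultimately have "D \<subseteq> V" using Ddef ssum_sub[OF V] by simp
  then show ?thesis using sub2 by auto
qed

lemma layer:
  assumes mx: "maximal_ideal m" and fin: "finite G" and C: "subspace C"
  shows "\<And>D U. subspace D \<Longrightarrow> C \<subseteq> D \<Longrightarrow> (\<forall>a\<in>m. \<forall>x\<in>D. a *s x \<in> C) \<Longrightarrow> D = ssum C (span G)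
     \<Longrightarrow> chainU U \<Longrightarrow> (\<And>t. subspace (U t)) \<Longrightarrow> (\<And>t. C \<subseteq> U t) \<Longrightarrow> (\<And>t. U t \<subseteq> D) \<Longrightarrow> evconst U"
  using fin
proof (induction G rule: finite_induct)
  case (empty D U)
  have "ssum C {0} = C" unfolding ssum_def by auto
  then have DC: "D = C" using empty.prems(4) by simp
  have "U t = C" for t using empty.prems(7)[of t] empty.prems(8)[of t] DC by auto
  then show ?case unfolding evconst_def by auto
next
  case (insert g G D U)
  note P = insert.prems
  define D' where "D' = ssum C (span G)"
  have D': "subspace D'" using D'_def subspace_ssum[OF C subspace_span] by simp
  have CD': "C \<subseteq> D'" using D'_def ssum_left[OF span_zero] by simp
  have "span G \<subseteq> span (insert g G)" by (rule span_mono) auto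
  then have D'D: "D' \<subseteq> D" unfolding D'_def P(4) ssum_def by blast
  have mD': "\<forall>a\<in>m. \<forall>x\<in>D'. a *s x \<in> C" using P(3) D'D by blast
  have e1: "evconst (\<lambda>t. U t \<inter> D')"
  proof (rule insert.IH[OF D' CD' mD' D'_def chainU_inter[OF P(5)]])
    fix t
    show "subspace (U t \<inter> D')" by (rule subspace_inter[OF P(6) D'])
    show "C \<subseteq> U t \<inter> D'" using P(7)[of t] CD' by blast
    show "U t \<inter> D' \<subseteq> D'" by blast
  qed
  have e2: "evconst (\<lambda>t. ssum (U t) D')"
  proof (rule evconst_two[OF chainU_ssum[OF P(5)]])
    fix t
    show "ssum (U t) D' = D' \<or> ssum (U t) D' = D"
    proof (rule one_dim[OF mx C subspace_ssum[OF P(6) D'] D'_def P(4) P(3)])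
      show "D' \<subseteq> ssum (U t) D'" by (rule ssum_right[OF subspace_0[OF P(6)]])
      show "ssum (U t) D' \<subseteq> D" by (rule ssum_sub[OF P(1) P(8) D'D])
    qed
  qed
  show ?case by (rule evconst_split[OF P(5) P(6) D' e1 e2])
qed

lemma subspace_mP: "subspace (mP scale I P)"
  unfolding mP_def by simp

lemma mP_sub: assumes P: "subspace P" shows "mP scale I P \<subseteq> P"
  unfolding mP_def
proof (rule span_minimal[OF _ P], rule subsetI)
  fix z assume "z \<in> {a *s x |a x. a \<in> I \<and> x \<in> P}"
  then obtain a x where "z = a *s x" "x \<in> P" by blast
  then show "z \<in> P" using subspace_scale[OF P] by simp
qed

lemma mP_UNIV: "subspace P \<Longrightarrow> mP scale UNIV P = P"
proof
  assume "subspace P" then show "mP scale UNIV P \<subseteq> P" by (rule mP_sub)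
next
  show "P \<subseteq> mP scale UNIV P"
  proof
    fix x assume "x \<in> P"
    then have "1 *s x \<in> {a *s x |a x. a \<in> UNIV \<and> x \<in> P}" by blast
    then have "1 *s x \<in> mP scale UNIV P" unfolding mP_def by (rule span_base)
    then show "x \<in> mP scale UNIV P" by simp
  qed
qed

lemma mP_mono: "I \<subseteq> J \<Longrightarrow> mP scale I P \<subseteq> mP scale J P"
  unfolding mP_def by (rule span_mono) blast

lemma mP_mult:
  assumes am: "a \<in> m" and xm: "x \<in> mP scale (ideal_pow m n) P"
  shows "a *s x \<in> mP scale (ideal_pow m (Suc n)) P"
proof -
  have "x \<in> span {c *s y |c y. c \<in> ideal_pow m n \<and> y \<in> P}" using xm unfolding mP_def .
  then show ?thesis
  proof (induction rule: span_induct)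
    case base
    show ?case by (rule subspace_scale_pre[OF subspace_mP])
  next
    case (step x)
    then obtain b y where bx: "x = b *s y" "b \<in> ideal_pow m n" "y \<in> P" by blast
    have e: "a *s x = (b * a) *s y" using bx(1) by (simp add: mult.commute)
    have ba: "b * a \<in> ideal_pow m (Suc n)" by (rule pow_mult[OF bx(2) am])
    have "(b * a) *s y \<in> {c *s y |c y. c \<in> ideal_pow m (Suc n) \<and> y \<in> P}" using ba bx(3) by blast
    then have "(b * a) *s y \<in> mP scale (ideal_pow m (Suc n)) P" unfolding mP_def by (rule span_base)
    then show ?case using e by simp
  qed
qed

lemma mP_fg:
  assumes noeth: "noetherian_ring TYPE('a)" and F: "finite F"
  shows "\<exists>G. finite G \<and> G \<subseteq> mP scale (ideal_pow m n) (span F) \<and> mP scale (ideal_pow m n) (span F) \<subseteq> span G"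
proof -
  have "\<exists>Fn. finite Fn \<and> Fn \<subseteq> ideal_pow m n \<and> ideal_gen Fn = ideal_pow m n"
    using noeth is_ideal_pow[of m n] unfolding noetherian_ring_def by blast
  then obtain Fn where Fn: "finite Fn" "Fn \<subseteq> ideal_pow m n" "ideal_gen Fn = ideal_pow m n" by blast
  define G where "G = (\<lambda>(b,f). b *s f) ` (Fn \<times> F)"
  have fG: "finite G" unfolding G_def using Fn(1) F by simp
  have GmP: "G \<subseteq> mP scale (ideal_pow m n) (span F)"
  proof
    fix z assume "z \<in> G"
    then obtain b f where bf: "z = b *s f" "b \<in> Fn" "f \<in> F" unfolding G_def by auto
    have "f \<in> span F" using bf(3) by (rule span_base)
    moreover have "b \<in> ideal_pow m n" using bf(2) Fn(2) by blast
    ultimately have "z \<in> {a *s x |a x. a \<in> ideal_pow m n \<and> x \<in> span F}" using bf(1) by blast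
    then show "z \<in> mP scale (ideal_pow m n) (span F)" unfolding mP_def by (rule span_base)
  qed
  have bx: "b *s x \<in> span G" if bF: "b \<in> Fn" and xF: "x \<in> span F" for b x
    using xF
  proof (induction rule: span_induct)
    case base show ?case by (rule subspace_scale_pre[OF subspace_span])
  next
    case (step f)
    have "b *s f \<in> G" unfolding G_def using bF step by (intro image_eqI[of _ _ "(b,f)"]) auto
    then show ?case by (simp add: span_base)
  qed
  have "mP scale (ideal_pow m n) (span F) \<subseteq> span G"
    unfolding mP_def
  proof (rule span_minimal[OF _ subspace_span], rule subsetI)
    fix z assume "z \<in> {a *s x |a x. a \<in> ideal_pow m n \<and> x \<in> span F}"
    then obtain a x where z: "z = a *s x" "a \<in> ideal_gen Fn" "x \<in> span F" using Fn(3) by blast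
    then obtain t r where tr: "finite t" "t \<subseteq> Fn" "a = (\<Sum>c\<in>t. r c * c)" unfolding ideal_gen_def by blast
    have "z = (\<Sum>c\<in>t. (r c * c) *s x)" using z(1) tr(3) by (simp only: scale_sum_left)
    also have "\<dots> = (\<Sum>c\<in>t. r c *s (c *s x))" by simp
    also have "\<dots> \<in> span G"
    proof (rule span_sum)
      fix c assume "c \<in> t"
      then have "c *s x \<in> span G" using tr(2) z(3) bx by blast
      then show "r c *s (c *s x) \<in> span G" by (rule span_scale)
    qed
    finally show "z \<in> span G" .
  qed
  then show ?thesis using fG GmP by blast
qed

lemma level:
  assumes mx: "maximal_ideal m" and noeth: "noetherian_ring TYPE('a)" and F: "finite F"
  shows "chainU U \<Longrightarrow> (\<And>t. subspace (U t)) \<Longrightarrow> (\<And>t. mP scale (ideal_pow m n) (span F) \<subseteq> U t)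
     \<Longrightarrow> (\<And>t. U t \<subseteq> span F) \<Longrightarrow> evconst U"
proof (induction n arbitrary: U)
  case 0
  have e: "mP scale (ideal_pow m 0) (span F) = span F" using mP_UNIV[OF subspace_span, of F] by simp
  have "U t = span F" for t using "0.prems"(3)[of t] "0.prems"(4)[of t] unfolding e by (rule subset_antisym[rotated])
  then show ?case unfolding evconst_def by auto
next
  case (Suc n U)
  define K where "K = mP scale (ideal_pow m n) (span F)"
  define C where "C = mP scale (ideal_pow m (Suc n)) (span F)"
  have K: "subspace K" "K \<subseteq> span F" unfolding K_def using subspace_mP mP_sub[OF subspace_span] by auto
  have Cs: "subspace C" unfolding C_def by (rule subspace_mP)
  have CK: "C \<subseteq> K" unfolding C_def K_def by (rule mP_mono[OF pow_Suc_sub])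
  have mK: "\<forall>a\<in>m. \<forall>x\<in>K. a *s x \<in> C" unfolding C_def K_def using mP_mult by blast
  obtain G where G: "finite G" "G \<subseteq> K" "K \<subseteq> span G" using mP_fg[OF noeth F, of m n] unfolding K_def by blast
  have KG: "K = ssum C (span G)"
  proof
    show "K \<subseteq> ssum C (span G)" using G(3) ssum_right[OF subspace_0[OF Cs]] by blast
    show "ssum C (span G) \<subseteq> K" using ssum_sub[OF K(1) CK span_minimal[OF G(2) K(1)]] .
  qed
  have e1: "evconst (\<lambda>t. U t \<inter> K)"
    apply (rule layer[OF mx G(1) Cs K(1) CK mK KG chainU_inter[OF Suc(2)]])
    using Suc(3,4) CK subspace_inter[OF _ K(1)] C_def by auto
  have e2: "evconst (\<lambda>t. ssum (U t) K)"
    apply (rule Suc.IH[OF chainU_ssum[OF Suc(2)] subspace_ssum[OF Suc(3) K(1)]])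
    unfolding K_def[symmetric]
    using ssum_right[OF subspace_0[OF Suc(3)]] ssum_sub[OF subspace_span Suc(5) K(2)] by auto
  show ?case by (rule evconst_split[OF Suc(2) Suc(3) K(1) e1 e2])
qed

end




locale mlset = module +
  fixes m :: "'a set" and k :: nat and e :: "nat \<Rightarrow> 'b"
  assumes gen: "span (e ` {..<k}) = UNIV"
    and mx: "maximal_ideal m"
    and noeth: "noetherian_ring TYPE('a)"
begin

abbreviation MM where "MM i \<equiv> IM scale m i"
abbreviation cs where "cs i x \<equiv> cos scale m i x"

definition lin :: "(nat \<Rightarrow> 'a) \<Rightarrow> (nat \<Rightarrow> 'b) \<Rightarrow> 'b" where
  "lin r w = (\<Sum>j<k. r j *s w j)"

definition rep :: "'b \<Rightarrow> nat \<Rightarrow> 'a" where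
  "rep x = (SOME r. x = lin r e)"

definition T :: "nat \<Rightarrow> (nat \<Rightarrow> 'b) set" where
  "T i = {w. \<forall>r. lin r e \<in> MM i \<longrightarrow> lin r w \<in> MM i}"

definition fw :: "(nat \<Rightarrow> 'b) \<Rightarrow> 'b \<Rightarrow> 'b" where
  "fw w x = lin (rep x) w"

definition good :: "nat \<Rightarrow> ('b \<Rightarrow> 'b) \<Rightarrow> bool" where
  "good i \<phi> \<longleftrightarrow> (\<forall>x y. \<phi> (x + y) - \<phi> x - \<phi> y \<in> MM i) \<and> (\<forall>a x. \<phi> (a *s x) - a *s \<phi> x \<in> MM i)
      \<and> (\<forall>x\<in>MM i. \<phi> x \<in> MM i)"

lemma submod_gen_span: "submod_gen scale F = span F"
  unfolding submod_gen_def span_explicit ..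

lemma MM_mP: "MM i = mP scale (ideal_pow m i) UNIV"
  unfolding IM_def submod_gen_span mP_def by simp

lemma MM_sub: "subspace (MM i)"
  unfolding MM_mP by (rule subspace_mP)

lemma MM_anti: "i \<le> j \<Longrightarrow> MM j \<subseteq> MM i"
  unfolding MM_mP by (rule mP_mono[OF pow_anti])

lemma MM_0: "MM 0 = UNIV"
  unfolding MM_mP using mP_UNIV[OF subspace_UNIV] by simp

lemma gen_MM: "a \<in> ideal_pow m i \<Longrightarrow> a *s x \<in> MM i"
  unfolding MM_mP mP_def by (rule span_base) blast

lemma MM_mult: "a \<in> m \<Longrightarrow> x \<in> MM i \<Longrightarrow> a *s x \<in> MM (Suc i)"
  unfolding MM_mP by (rule mP_mult)

lemma MM_add: "x \<in> MM i \<Longrightarrow> y \<in> MM i \<Longrightarrow> x + y \<in> MM i"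
  using subspace_add[OF MM_sub] .
lemma MM_diff: "x \<in> MM i \<Longrightarrow> y \<in> MM i \<Longrightarrow> x - y \<in> MM i"
  using subspace_diff[OF MM_sub] .
lemma MM_scale: "x \<in> MM i \<Longrightarrow> c *s x \<in> MM i"
  using subspace_scale[OF MM_sub] .
lemma MM_zero: "0 \<in> MM i"
  using subspace_0[OF MM_sub] .
lemma MM_neg: "x \<in> MM i \<Longrightarrow> - x \<in> MM i"
  using subspace_neg[OF MM_sub] .

lemma pow1_sub: "ideal_pow m (Suc 0) \<subseteq> m"
proof -
  have im: "is_ideal m" using mx unfolding maximal_ideal_def by simp
  have "{x * y |x y. x \<in> ideal_pow m 0 \<and> y \<in> m} \<subseteq> m" using im unfolding is_ideal_def by auto
  then show ?thesis using ideal_gen_min[OF im] by simp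
qed

lemma MM_pow: assumes a: "a \<in> ideal_pow m t" and x: "x \<in> MM (Suc 0)" shows "a *s x \<in> MM (Suc t)"
proof -
  have "x \<in> span {b *s y |b y. b \<in> ideal_pow m (Suc 0) \<and> y \<in> UNIV}" using x unfolding MM_mP mP_def .
  then show ?thesis
  proof (induction rule: span_induct)
    case base show ?case by (rule subspace_scale_pre[OF MM_sub])
  next
    case (step z)
    then obtain b y where hb: "z = b *s y" "b \<in> ideal_pow m (Suc 0)" by blast
    then have "b \<in> m" using pow1_sub by blast
    then have "a * b \<in> ideal_pow m (Suc t)" using pow_mult[OF a] by blast
    then have "(a * b) *s y \<in> MM (Suc t)" by (rule gen_MM)
    then show ?case using hb(1) by simp
  qed
qed

lemma cos_mem: "x \<in> cs i x"
  unfolding cos_def using MM_zero by (intro image_eqI[of _ _ 0]) auto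

lemma cos_eq: "cs i x = cs i y \<longleftrightarrow> x - y \<in> MM i"
proof
  assume "cs i x = cs i y"
  then have "x \<in> cs i y" using cos_mem by metis
  then obtain \<mu> where "\<mu> \<in> MM i" "x = y + \<mu>" unfolding cos_def by auto
  then show "x - y \<in> MM i" by simp
next
  assume h: "x - y \<in> MM i"
  show "cs i x = cs i y"
  proof
    show "cs i x \<subseteq> cs i y"
    proof
      fix z assume "z \<in> cs i x"
      then obtain \<mu> where \<mu>: "\<mu> \<in> MM i" "z = x + \<mu>" unfolding cos_def by auto
      then have "z = y + ((x - y) + \<mu>)" by simp
      moreover have "(x - y) + \<mu> \<in> MM i" using h \<mu> MM_add by blast
      ultimately show "z \<in> cs i y" unfolding cos_def by blast
    qed
  next
    show "cs i y \<subseteq> cs i x"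
    proof
      fix z assume "z \<in> cs i y"
      then obtain \<mu> where \<mu>: "\<mu> \<in> MM i" "z = y + \<mu>" unfolding cos_def by auto
      then have "z = x + (\<mu> - (x - y))" by simp
      moreover have "\<mu> - (x - y) \<in> MM i" using h \<mu> MM_diff by blast
      ultimately show "z \<in> cs i x" unfolding cos_def by blast
    qed
  qed
qed

lemma cos_add: "(\<lambda>(u,v). u + v) ` (cs i x \<times> cs i y) = cs i (x + y)"
proof
  show "(\<lambda>(u,v). u + v) ` (cs i x \<times> cs i y) \<subseteq> cs i (x + y)"
  proof
    fix z assume "z \<in> (\<lambda>(u,v). u + v) ` (cs i x \<times> cs i y)"
    then obtain u v where uv: "z = u + v" "u \<in> cs i x" "v \<in> cs i y" by auto
    then obtain \<mu> \<nu> where "\<mu> \<in> MM i" "\<nu> \<in> MM i" "u = x + \<mu>" "v = y + \<nu>" unfolding cos_def by auto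
    then have "z = (x + y) + (\<mu> + \<nu>)" "\<mu> + \<nu> \<in> MM i" using uv MM_add by (auto simp: algebra_simps)
    then show "z \<in> cs i (x + y)" unfolding cos_def by blast
  qed
next
  show "cs i (x + y) \<subseteq> (\<lambda>(u,v). u + v) ` (cs i x \<times> cs i y)"
  proof
    fix z assume "z \<in> cs i (x + y)"
    then obtain \<mu> where \<mu>: "\<mu> \<in> MM i" "z = x + y + \<mu>" unfolding cos_def by auto
    have "x + \<mu> \<in> cs i x" using \<mu>(1) unfolding cos_def by blast
    moreover have "y \<in> cs i y" by (rule cos_mem)
    ultimately have "(x + \<mu>, y) \<in> cs i x \<times> cs i y" by blast
    moreover have "z = (\<lambda>(u,v). u + v) (x + \<mu>, y)" using \<mu>(2) by (simp add: algebra_simps)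
    ultimately show "z \<in> (\<lambda>(u,v). u + v) ` (cs i x \<times> cs i y)" by blast
  qed
qed

lemma lin_add_w: "lin r (\<lambda>j. w j + w' j) = lin r w + lin r w'"
  unfolding lin_def by (simp add: scale_right_distrib sum.distrib)
lemma lin_scale_w: "lin r (\<lambda>j. c *s w j) = c *s lin r w"
  unfolding lin_def by (simp add: scale_sum_right mult.commute)
lemma lin_zero_w: "lin r (\<lambda>j. 0) = 0"
  unfolding lin_def by simp
lemma lin_add_r: "lin (\<lambda>j. r j + r' j) w = lin r w + lin r' w"
  unfolding lin_def by (simp add: scale_left_distrib sum.distrib)
lemma lin_diff_r: "lin (\<lambda>j. r j - r' j) w = lin r w - lin r' w"
  unfolding lin_def by (simp add: scale_left_diff_distrib sum_subtractf)
lemma lin_scale_r: "lin (\<lambda>j. a * r j) w = a *s lin r w"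
  unfolding lin_def by (simp add: scale_sum_right)

lemma lin_ex: "\<exists>r. x = lin r e"
proof -
  have "x \<in> span (e ` {..<k})" using gen by simp
  then show ?thesis
  proof (induction rule: span_induct)
    case base
    show ?case unfolding subspace_def
    proof (intro conjI ballI allI)
      have "lin (\<lambda>_. 0) e = 0" unfolding lin_def by simp
      then show "0 \<in> {x. \<exists>r. x = lin r e}" by (intro CollectI exI[of _ "\<lambda>_. 0"]) simp
    next
      fix x y assume "x \<in> {x. \<exists>r. x = lin r e}" "y \<in> {x. \<exists>r. x = lin r e}"
      then obtain r r' where h: "x = lin r e" "y = lin r' e" by blast
      have "x + y = lin (\<lambda>j. r j + r' j) e" unfolding lin_add_r h ..
      then show "x + y \<in> {x. \<exists>r. x = lin r e}" by blast
    next
      fix c x assume "x \<in> {x. \<exists>r. x = lin r e}"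
      then obtain r where h: "x = lin r e" by blast
      have "c *s x = lin (\<lambda>j. c * r j) e" unfolding lin_scale_r h ..
      then show "c *s x \<in> {x. \<exists>r. x = lin r e}" by blast
    qed
  next
    case (step x)
    then obtain j where j: "j < k" "x = e j" by auto
    have "lin (\<lambda>l. if l = j then 1 else 0) e = e j"
    proof -
      have "lin (\<lambda>l. if l = j then 1 else 0) e = (\<Sum>l<k. if l = j then e l else 0)"
        unfolding lin_def by (rule sum.cong) auto
      also have "\<dots> = e j" using j(1) by (simp add: sum.delta)
      finally show ?thesis .
    qed
    then show ?case using j(2) by (intro exI[of _ "\<lambda>l. if l = j then 1 else 0"]) simp
  qed
qed

lemma rep: "x = lin (rep x) e"
  unfolding rep_def using lin_ex[of x] by (rule someI_ex)


lemma MM_trans: "a - b \<in> MM i \<Longrightarrow> b - c \<in> MM i \<Longrightarrow> a - c \<in> MM i"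
proof -
  assume "a - b \<in> MM i" "b - c \<in> MM i"
  then have "(a - b) + (b - c) \<in> MM i" by (rule MM_add)
  then show ?thesis by simp
qed

lemma MM_sym: "a - b \<in> MM i \<Longrightarrow> b - a \<in> MM i"
proof -
  assume "a - b \<in> MM i"
  then have "- (a - b) \<in> MM i" by (rule MM_neg)
  then show ?thesis by simp
qed

lemma T_lin: "w \<in> T i \<Longrightarrow> lin r e \<in> MM i \<Longrightarrow> lin r w \<in> MM i"
  unfolding T_def by blast

lemma fw_cong: assumes w: "w \<in> T i" shows "fw w (lin r e) - lin r w \<in> MM i"
proof -
  let ?r0 = "rep (lin r e)"
  have "lin (\<lambda>j. ?r0 j - r j) e = lin ?r0 e - lin r e" by (rule lin_diff_r)
  also have "\<dots> = 0" using rep[of "lin r e"] by simp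
  finally have "lin (\<lambda>j. ?r0 j - r j) e \<in> MM i" using MM_zero by simp
  then have "lin (\<lambda>j. ?r0 j - r j) w \<in> MM i" by (rule T_lin[OF w])
  then show ?thesis unfolding lin_diff_r fw_def .
qed

lemma good_fw: assumes w: "w \<in> T i" shows "good i (fw w)"
  unfolding good_def
proof (intro conjI allI ballI)
  fix x y
  let ?\<rho> = "\<lambda>j. (rep (x + y) j - rep x j) - rep y j"
  have "\<And>v. lin ?\<rho> v = lin (rep (x + y)) v - lin (rep x) v - lin (rep y) v"
    by (simp only: lin_diff_r)
  then have "lin ?\<rho> e = (x + y) - x - y" using rep[of x] rep[of y] rep[of "x+y"] by simp
  then have "lin ?\<rho> e \<in> MM i" using MM_zero by simp
  then have "lin ?\<rho> w \<in> MM i" by (rule T_lin[OF w])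
  then show "fw w (x + y) - fw w x - fw w y \<in> MM i"
    unfolding fw_def using \<open>\<And>v. lin ?\<rho> v = _\<close> by simp
next
  fix a x
  let ?\<rho> = "\<lambda>j. rep (a *s x) j - a * rep x j"
  have eq: "\<And>v. lin ?\<rho> v = lin (rep (a *s x)) v - a *s lin (rep x) v"
    by (simp only: lin_diff_r lin_scale_r)
  then have "lin ?\<rho> e = a *s x - a *s x" using rep[of x] rep[of "a *s x"] by simp
  then have "lin ?\<rho> e \<in> MM i" using MM_zero by simp
  then have "lin ?\<rho> w \<in> MM i" by (rule T_lin[OF w])
  then show "fw w (a *s x) - a *s fw w x \<in> MM i"
    unfolding fw_def using eq by simp
next
  fix x assume "x \<in> MM i"
  then have "lin (rep x) e \<in> MM i" using rep[of x] by simp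
  then show "fw w x \<in> MM i" unfolding fw_def by (rule T_lin[OF w])
qed

lemma good_add: "good i \<phi> \<Longrightarrow> \<phi> (x + y) - \<phi> x - \<phi> y \<in> MM i"
  unfolding good_def by blast
lemma good_scale: "good i \<phi> \<Longrightarrow> \<phi> (a *s x) - a *s \<phi> x \<in> MM i"
  unfolding good_def by blast
lemma good_pres: "good i \<phi> \<Longrightarrow> x \<in> MM i \<Longrightarrow> \<phi> x \<in> MM i"
  unfolding good_def by blast

lemma good_cong: assumes g: "good i \<phi>" and d: "x - x' \<in> MM i" shows "\<phi> x - \<phi> x' \<in> MM i"
proof -
  have "\<phi> ((x - x') + x') - \<phi> (x - x') - \<phi> x' \<in> MM i" by (rule good_add[OF g])
  moreover have "\<phi> (x - x') \<in> MM i" by (rule good_pres[OF g d])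
  ultimately have "(\<phi> ((x - x') + x') - \<phi> (x - x') - \<phi> x') + \<phi> (x - x') \<in> MM i" by (rule MM_add)
  then show ?thesis by simp
qed

lemma good_diff: assumes g: "good i \<phi>" shows "\<phi> (x - y) - (\<phi> x - \<phi> y) \<in> MM i"
proof -
  have "\<phi> ((x - y) + y) - \<phi> (x - y) - \<phi> y \<in> MM i" by (rule good_add[OF g])
  then have "- (\<phi> ((x - y) + y) - \<phi> (x - y) - \<phi> y) \<in> MM i" by (rule MM_neg)
  then show ?thesis by (simp add: algebra_simps)
qed

lemma good_comp: assumes p: "good i \<phi>" and q: "good i \<psi>" shows "good i (\<lambda>x. \<phi> (\<psi> x))"
  unfolding good_def
proof (intro conjI allI ballI)
  fix x y
  have "\<psi> (x + y) - (\<psi> x + \<psi> y) \<in> MM i" using good_add[OF q, of x y] by (simp add: algebra_simps)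
  then have a: "\<phi> (\<psi> (x + y)) - \<phi> (\<psi> x + \<psi> y) \<in> MM i" by (rule good_cong[OF p])
  have b: "\<phi> (\<psi> x + \<psi> y) - \<phi> (\<psi> x) - \<phi> (\<psi> y) \<in> MM i" by (rule good_add[OF p])
  have "(\<phi> (\<psi> (x + y)) - \<phi> (\<psi> x + \<psi> y)) + (\<phi> (\<psi> x + \<psi> y) - \<phi> (\<psi> x) - \<phi> (\<psi> y)) \<in> MM i"
    using a b by (rule MM_add)
  then show "\<phi> (\<psi> (x + y)) - \<phi> (\<psi> x) - \<phi> (\<psi> y) \<in> MM i" by (simp add: algebra_simps)
next
  fix a x
  have "\<phi> (\<psi> (a *s x)) - \<phi> (a *s \<psi> x) \<in> MM i" by (rule good_cong[OF p good_scale[OF q]])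
  moreover have "\<phi> (a *s \<psi> x) - a *s \<phi> (\<psi> x) \<in> MM i" by (rule good_scale[OF p])
  ultimately show "\<phi> (\<psi> (a *s x)) - a *s \<phi> (\<psi> x) \<in> MM i" by (rule MM_trans)
next
  fix x assume "x \<in> MM i"
  then show "\<phi> (\<psi> x) \<in> MM i" using good_pres[OF p good_pres[OF q]] by blast
qed

lemma good_id: "good i (\<lambda>x. x)"
  unfolding good_def using MM_zero by simp

lemma good_pow: "good i \<phi> \<Longrightarrow> good i (\<phi> ^^ t)"
proof (induction t)
  case 0 then show ?case using good_id by (simp add: id_def)
next
  case (Suc t)
  have "good i (\<lambda>x. \<phi> ((\<phi> ^^ t) x))" by (rule good_comp[OF Suc.prems Suc.IH[OF Suc.prems]])
  then show ?case by (simp add: comp_def)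
qed

lemma good_weaken: assumes g: "good i' \<phi>" and le: "i \<le> i'" shows "good i \<phi>"
  unfolding good_def
proof (intro conjI allI ballI)
  fix x y show "\<phi> (x + y) - \<phi> x - \<phi> y \<in> MM i" using good_add[OF g] MM_anti[OF le] by blast
next
  fix a x show "\<phi> (a *s x) - a *s \<phi> x \<in> MM i" using good_scale[OF g] MM_anti[OF le] by blast
next
  fix x assume "x \<in> MM i"
  then have "x \<in> span {a *s y |a y. a \<in> ideal_pow m i \<and> y \<in> UNIV}" unfolding MM_mP mP_def .
  then show "\<phi> x \<in> MM i"
  proof (induction rule: span_induct)
    case base
    show ?case unfolding subspace_def
    proof (intro conjI ballI allI)
      have "\<phi> 0 \<in> MM i'" by (rule good_pres[OF g MM_zero])
      then show "0 \<in> {x. \<phi> x \<in> MM i}" using MM_anti[OF le] by blast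
    next
      fix x y assume h: "x \<in> {x. \<phi> x \<in> MM i}" "y \<in> {x. \<phi> x \<in> MM i}"
      have "\<phi> (x + y) - \<phi> x - \<phi> y \<in> MM i" using good_add[OF g] MM_anti[OF le] by blast
      moreover have "\<phi> x + \<phi> y \<in> MM i" using h MM_add by blast
      ultimately have "(\<phi> (x + y) - \<phi> x - \<phi> y) + (\<phi> x + \<phi> y) \<in> MM i" by (rule MM_add)
      then show "x + y \<in> {x. \<phi> x \<in> MM i}" by simp
    next
      fix c x assume h: "x \<in> {x. \<phi> x \<in> MM i}"
      have "\<phi> (c *s x) - c *s \<phi> x \<in> MM i" using good_scale[OF g] MM_anti[OF le] by blast
      moreover have "c *s \<phi> x \<in> MM i" using h MM_scale by blast
      ultimately have "(\<phi> (c *s x) - c *s \<phi> x) + c *s \<phi> x \<in> MM i" by (rule MM_add)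
      then show "c *s x \<in> {x. \<phi> x \<in> MM i}" by simp
    qed
  next
    case (step z)
    then obtain a y where ay: "z = a *s y" "a \<in> ideal_pow m i" by blast
    have "\<phi> (a *s y) - a *s \<phi> y \<in> MM i" using good_scale[OF g] MM_anti[OF le] by blast
    moreover have "a *s \<phi> y \<in> MM i" by (rule gen_MM[OF ay(2)])
    ultimately have "(\<phi> (a *s y) - a *s \<phi> y) + a *s \<phi> y \<in> MM i" by (rule MM_add)
    then show ?case using ay(1) by simp
  qed
qed

lemma T_anti: assumes le: "i \<le> i'" shows "T i' \<subseteq> T i"
proof
  fix w assume w: "w \<in> T i'"
  have g: "good i (fw w)" by (rule good_weaken[OF good_fw[OF w] le])
  show "w \<in> T i" unfolding T_def
  proof (intro CollectI allI impI)
    fix r assume "lin r e \<in> MM i"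
    then have a: "fw w (lin r e) \<in> MM i" by (rule good_pres[OF g])
    have "fw w (lin r e) - lin r w \<in> MM i" using fw_cong[OF w] MM_anti[OF le] by blast
    then have "fw w (lin r e) - (fw w (lin r e) - lin r w) \<in> MM i" using a MM_diff by blast
    then show "lin r w \<in> MM i" by simp
  qed
qed


lemma cs_Mq: "cs i x \<in> Mq scale m i"
  unfolding Mq_def by (rule rangeI)

lemma g_val: assumes g: "g \<in> AutM scale m i" shows "\<exists>z. g (cs i x) = cs i z"
proof -
  have b: "bij_betw g (Mq scale m i) (Mq scale m i)" using g unfolding AutM_def by blast
  have "g (cs i x) \<in> g ` Mq scale m i" using cs_Mq by blast
  then have "g (cs i x) \<in> Mq scale m i" using b unfolding bij_betw_def by simp
  then show ?thesis unfolding Mq_def by (auto simp del: cos_def)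
qed

lemma g_add: assumes g: "g \<in> AutM scale m i" and x: "g (cs i x) = cs i x'" and y: "g (cs i y) = cs i y'"
  shows "g (cs i (x + y)) = cs i (x' + y')"
proof -
  have "g (cs i (x + y)) = (\<lambda>(u,v). u + v) ` (g (cs i x) \<times> g (cs i y))"
    using g unfolding AutM_def by blast
  also have "\<dots> = cs i (x' + y')" unfolding x y by (rule cos_add)
  finally show ?thesis .
qed

lemma g_scale: assumes g: "g \<in> AutM scale m i" and x: "g (cs i x) = cs i z"
  shows "g (cs i (a *s x)) = cs i (a *s z)"
  using g x unfolding AutM_def by blast

lemma g_zero: assumes g: "g \<in> AutM scale m i" shows "g (cs i 0) = cs i 0"
proof -
  obtain z where z: "g (cs i 0) = cs i z" using g_val[OF g] by blast
  have "g (cs i (0 *s 0)) = cs i (0 *s z)" by (rule g_scale[OF g z])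
  then show ?thesis by simp
qed

lemma g_lin: assumes g: "g \<in> AutM scale m i" and w: "\<forall>j<k. g (cs i (e j)) = cs i (w j)"
  shows "g (cs i (lin r e)) = cs i (lin r w)"
proof -
  have "J \<subseteq> {..<k} \<Longrightarrow> g (cs i (\<Sum>j\<in>J. r j *s e j)) = cs i (\<Sum>j\<in>J. r j *s w j)" if "finite J" for J
    using that
  proof (induction J rule: finite_induct)
    case empty then show ?case using g_zero[OF g] by simp
  next
    case (insert j J)
    have a: "g (cs i (r j *s e j)) = cs i (r j *s w j)"
      using insert.prems w by (intro g_scale[OF g]) auto
    have b: "g (cs i (\<Sum>j\<in>J. r j *s e j)) = cs i (\<Sum>j\<in>J. r j *s w j)" using insert by auto
    show ?case using g_add[OF g a b] insert.hyps by simp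
  qed
  then show ?thesis unfolding lin_def by simp
qed

lemma dir1:
  assumes h: "h \<in> red_image scale m i n"
  shows "h \<in> AutM scale m n \<and> (\<exists>w\<in>T i. \<forall>j<k. h (cs n (e j)) = cs n (w j))"
proof -
  obtain g where g: "g \<in> AutM scale m i" and hn: "h \<in> AutM scale m n"
    and red: "\<forall>x y. g (cs i x) = cs i y \<longrightarrow> h (cs n x) = cs n y"
    using h unfolding red_image_def by blast
  define w where "w j = (SOME z. g (cs i (e j)) = cs i z)" for j
  have gw: "g (cs i (e j)) = cs i (w j)" for j
    unfolding w_def using g_val[OF g, of "e j"] by (rule someI_ex)
  have "w \<in> T i" unfolding T_def
  proof (intro CollectI allI impI)
    fix r assume "lin r e \<in> MM i"
    then have "cs i (lin r e) = cs i 0" unfolding cos_eq by simp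
    then have "cs i (lin r w) = cs i 0" using g_lin[OF g, of w r] gw g_zero[OF g] by simp
    then show "lin r w \<in> MM i" unfolding cos_eq by simp
  qed
  moreover have "\<forall>j<k. h (cs n (e j)) = cs n (w j)" using red gw by blast
  ultimately show ?thesis using hn by blast
qed


lemma surj_nak:
  assumes g: "good i f" and s1: "\<forall>y. \<exists>x. f x - y \<in> MM (Suc 0)"
  shows "\<exists>x. f x - y \<in> MM i"
proof -
  define V where "V = {f x + \<mu> | x \<mu>. \<mu> \<in> MM i}"
  have V: "subspace V" unfolding subspace_def
  proof (intro conjI ballI allI)
    have "0 = f 0 + (- f 0)" by simp
    moreover have "- f 0 \<in> MM i" using good_pres[OF g MM_zero] by (rule MM_neg)
    ultimately show "0 \<in> V" unfolding V_def by blast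
  next
    fix u v assume "u \<in> V" "v \<in> V"
    then obtain x \<mu> x' \<mu>' where h: "u = f x + \<mu>" "\<mu> \<in> MM i" "v = f x' + \<mu>'" "\<mu>' \<in> MM i"
      unfolding V_def by blast
    have d: "f (x + x') - f x - f x' \<in> MM i" by (rule good_add[OF g])
    have "\<mu> + \<mu>' - (f (x + x') - f x - f x') \<in> MM i" using h(2,4) d MM_add MM_diff by blast
    moreover have "u + v = f (x + x') + (\<mu> + \<mu>' - (f (x + x') - f x - f x'))" using h by (simp add: algebra_simps)
    ultimately show "u + v \<in> V" unfolding V_def by blast
  next
    fix c u assume "u \<in> V"
    then obtain x \<mu> where h: "u = f x + \<mu>" "\<mu> \<in> MM i" unfolding V_def by blast
    have d: "f (c *s x) - c *s f x \<in> MM i" by (rule good_scale[OF g])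
    have "c *s \<mu> - (f (c *s x) - c *s f x) \<in> MM i" using h(2) d MM_scale MM_diff by blast
    moreover have "c *s u = f (c *s x) + (c *s \<mu> - (f (c *s x) - c *s f x))" using h by (simp add: algebra_simps)
    ultimately show "c *s u \<in> V" unfolding V_def by blast
  qed
  have fV: "c *s f x \<in> V" for c x
  proof -
    have "c *s f x - f (c *s x) \<in> MM i" using good_scale[OF g] by (rule MM_sym)
    moreover have "c *s f x = f (c *s x) + (c *s f x - f (c *s x))" by simp
    ultimately show ?thesis unfolding V_def by blast
  qed
  have nak: "\<forall>y. y \<in> ssum V (MM t)" for t
  proof (induction t)
    case 0
    show ?case
    proof
      fix yy :: 'b
      have "yy = 0 + yy" by simp
      moreover have "0 \<in> V" by (rule subspace_0[OF V])
      moreover have "yy \<in> MM 0" using MM_0 by simp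
      ultimately show "yy \<in> ssum V (MM 0)" unfolding ssum_def by blast
    qed
  next
    case (Suc t)
    have W: "subspace (ssum V (MM (Suc t)))" by (rule subspace_ssum[OF V MM_sub])
    have mu: "\<mu> \<in> ssum V (MM (Suc t))" if "\<mu> \<in> MM t" for \<mu>
    proof -
      have "\<mu> \<in> span {a *s z |a z. a \<in> ideal_pow m t \<and> z \<in> UNIV}" using that unfolding MM_mP mP_def .
      then show ?thesis
      proof (induction rule: span_induct)
        case base show ?case using W by simp
      next
        case (step q)
        then obtain a z where az: "q = a *s z" "a \<in> ideal_pow m t" by blast
        obtain x where x: "f x - z \<in> MM (Suc 0)" using s1 by blast
        have b: "a *s (f x - z) \<in> MM (Suc t)" by (rule MM_pow[OF az(2) x])
        have "q = a *s f x + (- (a *s (f x - z)))" using az(1) by (simp add: algebra_simps)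
        moreover have "- (a *s (f x - z)) \<in> MM (Suc t)" using b by (rule MM_neg)
        ultimately show ?case using fV unfolding ssum_def by blast
      qed
    qed
    show ?case
    proof
      fix y
      obtain v \<mu> where vm: "y = v + \<mu>" "v \<in> V" "\<mu> \<in> MM t" using Suc.IH unfolding ssum_def by blast
      obtain v' \<mu>' where vm': "\<mu> = v' + \<mu>'" "v' \<in> V" "\<mu>' \<in> MM (Suc t)" using mu[OF vm(3)] unfolding ssum_def by blast
      have "y = (v + v') + \<mu>'" using vm vm' by (simp add: algebra_simps)
      moreover have "v + v' \<in> V" using vm(2) vm'(2) by (rule subspace_add[OF V])
      ultimately show "y \<in> ssum V (MM (Suc t))" using vm'(3) unfolding ssum_def by blast
    qed
  qed
  obtain v \<mu> where vm: "y = v + \<mu>" "v \<in> V" "\<mu> \<in> MM i" using nak[of i] unfolding ssum_def by blast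
  obtain x \<mu>' where xm: "v = f x + \<mu>'" "\<mu>' \<in> MM i" using vm(2) unfolding V_def by blast
  have m1: "- (\<mu>' + \<mu>) \<in> MM i" using xm(2) vm(3) MM_add MM_neg by blast
  have eq: "f x - y = - (\<mu>' + \<mu>)" using vm(1) xm(1) by (simp add: algebra_simps)
  have "f x - y \<in> MM i" unfolding eq by (rule m1)
  then show ?thesis by (rule exI)
qed

lemma surj_pow:
  assumes g: "good i f" and s: "\<forall>y. \<exists>x. f x - y \<in> MM i"
  shows "\<exists>z. (f ^^ t) z - y \<in> MM i"
proof (induction t arbitrary: y)
  case 0 show ?case using MM_zero by (intro exI[of _ y]) simp
next
  case (Suc t)
  obtain x where x: "f x - y \<in> MM i" using s by blast
  obtain z where z: "(f ^^ t) z - x \<in> MM i" using Suc.IH by blast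
  have "f ((f ^^ t) z) - f x \<in> MM i" by (rule good_cong[OF g z])
  then have "f ((f ^^ t) z) - y \<in> MM i" using x by (rule MM_trans)
  then show ?case by (intro exI[of _ z]) simp
qed

lemma inj_acc:
  assumes g: "good i f" and s: "\<forall>y. \<exists>x. f x - y \<in> MM i" and fx: "f x \<in> MM i"
  shows "x \<in> MM i"
proof -
  define K where "K t = {x. (f ^^ t) x \<in> MM i}" for t
  have gp: "good i (f ^^ t)" for t by (rule good_pow[OF g])
  have ch: "chainU K" unfolding chainU_def
  proof (rule disjI1, intro allI subsetI)
    fix t x assume "x \<in> K t"
    then have "f ((f ^^ t) x) \<in> MM i" unfolding K_def using good_pres[OF g] by blast
    then show "x \<in> K (Suc t)" unfolding K_def by simp
  qed
  have sK: "subspace (K t)" for t unfolding subspace_def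
  proof (intro conjI ballI allI)
    show "0 \<in> K t" unfolding K_def using good_pres[OF gp MM_zero] by blast
  next
    fix x y assume h: "x \<in> K t" "y \<in> K t"
    have "(f ^^ t) (x + y) - (f ^^ t) x - (f ^^ t) y \<in> MM i" by (rule good_add[OF gp])
    moreover have "(f ^^ t) x + (f ^^ t) y \<in> MM i" using h MM_add unfolding K_def by blast
    ultimately have "((f ^^ t) (x + y) - (f ^^ t) x - (f ^^ t) y) + ((f ^^ t) x + (f ^^ t) y) \<in> MM i" by (rule MM_add)
    then show "x + y \<in> K t" unfolding K_def by simp
  next
    fix c x assume h: "x \<in> K t"
    have "(f ^^ t) (c *s x) - c *s (f ^^ t) x \<in> MM i" by (rule good_scale[OF gp])
    moreover have "c *s (f ^^ t) x \<in> MM i" using h MM_scale unfolding K_def by blast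
    ultimately have "((f ^^ t) (c *s x) - c *s (f ^^ t) x) + c *s (f ^^ t) x \<in> MM i" by (rule MM_add)
    then show "c *s x \<in> K t" unfolding K_def by simp
  qed
  have low: "mP scale (ideal_pow m i) (span (e ` {..<k})) \<subseteq> K t" for t
    unfolding gen MM_mP[symmetric] K_def using good_pres[OF gp] by blast
  have up: "K t \<subseteq> span (e ` {..<k})" for t using gen by simp
  have "evconst K" by (rule level[OF mx noeth finite_imageI[OF finite_lessThan] ch sK low up])
  then obtain N where N: "\<forall>t\<ge>N. K t = K N" unfolding evconst_def by blast
  obtain z where z: "(f ^^ N) z - x \<in> MM i" using surj_pow[OF g s] by blast
  have "f ((f ^^ N) z) - f x \<in> MM i" by (rule good_cong[OF g z])
  then have "f ((f ^^ N) z) - f x + f x \<in> MM i" using fx by (rule MM_add)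
  then have "z \<in> K (Suc N)" unfolding K_def by simp
  then have "z \<in> K N" using N by (metis le_SucI order_refl)
  then have "(f ^^ N) z \<in> MM i" unfolding K_def by simp
  then have "(f ^^ N) z - ((f ^^ N) z - x) \<in> MM i" using z by (rule MM_diff)
  then show ?thesis by simp
qed


lemma dir2:
  assumes n1: "1 \<le> n" and ni: "n \<le> i" and h: "h \<in> AutM scale m n" and w: "w \<in> T i"
    and hw: "\<forall>j<k. h (cs n (e j)) = cs n (w j)"
  shows "h \<in> red_image scale m i n"
proof -
  define f where "f = fw w"
  have g: "good i f" unfolding f_def by (rule good_fw[OF w])
  have hf: "h (cs n x) = cs n (f x)" for x
  proof -
    have eq: "lin (rep x) e = x" by (rule rep[symmetric])
    have "h (cs n (lin (rep x) e)) = cs n (lin (rep x) w)" by (rule g_lin[OF h hw])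
    then show ?thesis unfolding eq f_def fw_def .
  qed
  have s1: "\<forall>y. \<exists>x. f x - y \<in> MM (Suc 0)"
  proof
    fix y
    have b: "bij_betw h (Mq scale m n) (Mq scale m n)" using h unfolding AutM_def by blast
    have "cs n y \<in> h ` Mq scale m n" using b cs_Mq unfolding bij_betw_def by blast
    then obtain x where "h (cs n x) = cs n y" unfolding Mq_def by blast
    then have "cs n (f x) = cs n y" using hf by simp
    then have "f x - y \<in> MM n" unfolding cos_eq .
    then have "f x - y \<in> MM (Suc 0)" using MM_anti[of "Suc 0" n] n1 by auto
    then show "\<exists>x. f x - y \<in> MM (Suc 0)" by (rule exI)
  qed
  have s: "\<forall>y. \<exists>x. f x - y \<in> MM i" using surj_nak[OF g s1] by blast
  have inj: "x \<in> MM i" if "f x \<in> MM i" for x by (rule inj_acc[OF g s that])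
  define G where "G X = (if X \<in> Mq scale m i then cs i (f (SOME x. X = cs i x)) else {})" for X
  have Gcs: "G (cs i x) = cs i (f x)" for x
  proof -
    have ex: "\<exists>x'. cs i x = cs i x'" by blast
    have "cs i x = cs i (SOME x'. cs i x = cs i x')" by (rule someI_ex[OF ex])
    then have "x - (SOME x'. cs i x = cs i x') \<in> MM i" unfolding cos_eq .
    then have "f x - f (SOME x'. cs i x = cs i x') \<in> MM i" by (rule good_cong[OF g])
    then have "cs i (f (SOME x'. cs i x = cs i x')) = cs i (f x)" using MM_sym unfolding cos_eq by blast
    then show ?thesis unfolding G_def using cs_Mq by simp
  qed
  have GA: "G \<in> AutM scale m i" unfolding AutM_def
  proof (intro CollectI conjI allI impI)
    show "bij_betw G (Mq scale m i) (Mq scale m i)" unfolding bij_betw_def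
    proof
      show "inj_on G (Mq scale m i)"
      proof (rule inj_onI)
        fix X Y assume "X \<in> Mq scale m i" "Y \<in> Mq scale m i" and GXY: "G X = G Y"
        then obtain x y where xy: "X = cs i x" "Y = cs i y" unfolding Mq_def by blast
        have "cs i (f x) = cs i (f y)" using GXY unfolding xy Gcs .
        then have "f x - f y \<in> MM i" unfolding cos_eq .
        moreover have "f (x - y) - (f x - f y) \<in> MM i" by (rule good_diff[OF g])
        ultimately have "f (x - y) - (f x - f y) + (f x - f y) \<in> MM i" using MM_add by blast
        then have "f (x - y) \<in> MM i" by simp
        then have "x - y \<in> MM i" by (rule inj)
        then show "X = Y" unfolding xy cos_eq .
      qed
    next
      show "G ` Mq scale m i = Mq scale m i"
      proof
        show "G ` Mq scale m i \<subseteq> Mq scale m i" unfolding Mq_def using Gcs by auto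
      next
        show "Mq scale m i \<subseteq> G ` Mq scale m i"
        proof
          fix Y assume "Y \<in> Mq scale m i"
          then obtain y where y: "Y = cs i y" unfolding Mq_def by blast
          obtain x where "f x - y \<in> MM i" using s by blast
          then have "cs i (f x) = cs i y" unfolding cos_eq .
          then have "Y = G (cs i x)" using y Gcs by simp
          then show "Y \<in> G ` Mq scale m i" using cs_Mq by blast
        qed
      qed
    qed
  next
    fix X assume "X \<notin> Mq scale m i" then show "G X = {}" unfolding G_def by simp
  next
    fix x y
    have "f (x + y) - f x - f y \<in> MM i" by (rule good_add[OF g])
    then have "f (x + y) - (f x + f y) \<in> MM i" by (simp add: algebra_simps)
    then have "cs i (f (x + y)) = cs i (f x + f y)" unfolding cos_eq .
    then show "G (cs i (x + y)) = (\<lambda>(u,v). u + v) ` (G (cs i x) \<times> G (cs i y))"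
      unfolding Gcs cos_add by simp
  next
    fix a x z assume "G (cs i x) = cs i z"
    then have "cs i (f x) = cs i z" unfolding Gcs .
    then have "f x - z \<in> MM i" unfolding cos_eq .
    then have "a *s (f x - z) \<in> MM i" by (rule MM_scale)
    then have "a *s f x - a *s z \<in> MM i" by (simp add: scale_right_diff_distrib)
    with good_scale[OF g] have "f (a *s x) - a *s z \<in> MM i" by (rule MM_trans)
    then show "G (cs i (a *s x)) = cs i (a *s z)" unfolding Gcs cos_eq .
  qed
  have "\<forall>x y. G (cs i x) = cs i y \<longrightarrow> h (cs n x) = cs n y"
  proof (intro allI impI)
    fix x y assume "G (cs i x) = cs i y"
    then have "f x - y \<in> MM i" unfolding Gcs cos_eq .
    then have "f x - y \<in> MM n" using MM_anti[OF ni] by blast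
    then have "cs n (f x) = cs n y" unfolding cos_eq .
    then show "h (cs n x) = cs n y" using hf by simp
  qed
  then show ?thesis unfolding red_image_def using h GA by blast
qed


abbreviation sf :: "'a \<Rightarrow> (nat \<Rightarrow> 'b) \<Rightarrow> (nat \<Rightarrow> 'b)" where "sf \<equiv> \<lambda>a v j. a *s v j"

lemma module_sf: "module sf"
  by unfold_locales (auto simp: fun_eq_iff scale_right_distrib scale_left_distrib)

definition PP :: "(nat \<Rightarrow> 'b) set" where "PP = {v. \<forall>j\<ge>k. v j = 0}"

definition del :: "nat \<Rightarrow> 'b \<Rightarrow> nat \<Rightarrow> 'b" where "del j x = (\<lambda>i. if i = j then x else 0)"

definition Fp :: "(nat \<Rightarrow> 'b) set" where "Fp = (\<lambda>(j,l). del j (e l)) ` ({..<k} \<times> {..<k})"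

lemma sum_apply_fun: "finite A \<Longrightarrow> (sum F A) i = (\<Sum>x\<in>A. F x i)"
  by (induction A rule: finite_induct) simp_all

lemma PP_sub: "module.subspace sf PP"
  unfolding module.subspace_def[OF module_sf] PP_def by auto

lemma PP_span: "module.span sf Fp = PP"
proof
  show "module.span sf Fp \<subseteq> PP"
  proof (rule module.span_minimal[OF module_sf _ PP_sub])
    show "Fp \<subseteq> PP" unfolding Fp_def PP_def del_def by auto
  qed
next
  show "PP \<subseteq> module.span sf Fp"
  proof
    fix v assume v: "v \<in> PP"
    have dj: "del j y \<in> module.span sf Fp" if j: "j < k" for j y
    proof -
      have "y \<in> span (e ` {..<k})" using gen by simp
      then show ?thesis
      proof (induction rule: span_induct)
        case base
        show ?case unfolding subspace_def
        proof (intro conjI ballI allI)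
          have "del j 0 = 0" unfolding del_def by (auto simp: fun_eq_iff)
          then show "0 \<in> {y. del j y \<in> module.span sf Fp}" using module.span_zero[OF module_sf] by simp
        next
          fix x y assume "x \<in> {y. del j y \<in> module.span sf Fp}" "y \<in> {y. del j y \<in> module.span sf Fp}"
          moreover have "del j (x + y) = del j x + del j y" unfolding del_def by (auto simp: fun_eq_iff)
          ultimately show "x + y \<in> {y. del j y \<in> module.span sf Fp}" using module.span_add[OF module_sf] by simp
        next
          fix c x assume "x \<in> {y. del j y \<in> module.span sf Fp}"
          moreover have "del j (c *s x) = sf c (del j x)" unfolding del_def by (auto simp: fun_eq_iff)
          ultimately show "c *s x \<in> {y. del j y \<in> module.span sf Fp}" using module.span_scale[OF module_sf] by simp
        qed
      next
        case (step x)
        then obtain l where l: "l < k" "x = e l" by auto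
        have "del j (e l) \<in> Fp" unfolding Fp_def using j l(1) by (intro image_eqI[of _ _ "(j,l)"]) auto
        then show ?case using l(2) module.span_base[OF module_sf] by simp
      qed
    qed
    have "v = (\<Sum>j<k. del j (v j))"
    proof
      fix i
      have "(\<Sum>j<k. del j (v j)) i = (\<Sum>j<k. del j (v j) i)" by (rule sum_apply_fun) simp
      also have "\<dots> = (\<Sum>j<k. if i = j then v j else 0)" unfolding del_def by simp
      also have "\<dots> = v i" using v unfolding PP_def by (auto simp: sum.delta')
      finally show "v i = (\<Sum>j<k. del j (v j)) i" by simp
    qed
    also have "\<dots> \<in> module.span sf Fp" using dj by (intro module.span_sum[OF module_sf]) auto
    finally show "v \<in> module.span sf Fp" .
  qed
qed

lemma finite_Fp: "finite Fp" unfolding Fp_def by simp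

definition S :: "nat \<Rightarrow> nat \<Rightarrow> (nat \<Rightarrow> 'b) set" where
  "S n i = {v. (\<forall>j\<ge>k. v j = 0) \<and> (\<exists>w\<in>T i. \<forall>j<k. v j - w j \<in> MM n)}"

lemma T_zero: "(\<lambda>j. 0) \<in> T i"
  unfolding T_def using lin_zero_w MM_zero by simp

lemma T_add: "w \<in> T i \<Longrightarrow> w' \<in> T i \<Longrightarrow> (\<lambda>j. w j + w' j) \<in> T i"
  unfolding T_def using lin_add_w MM_add by simp

lemma T_scale: "w \<in> T i \<Longrightarrow> (\<lambda>j. c *s w j) \<in> T i"
  unfolding T_def using lin_scale_w MM_scale by simp

lemma S_sub: "module.subspace sf (S n i)"
  unfolding module.subspace_def[OF module_sf]
proof (intro conjI ballI allI)
  show "0 \<in> S n i" unfolding S_def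
    by (rule CollectI, rule conjI, simp, rule bexI[OF _ T_zero], simp add: MM_zero)
next
  fix v v' assume "v \<in> S n i" "v' \<in> S n i"
  then obtain w w' where h: "\<forall>j\<ge>k. v j = 0" "\<forall>j\<ge>k. v' j = 0" "w \<in> T i" "w' \<in> T i"
    "\<forall>j<k. v j - w j \<in> MM n" "\<forall>j<k. v' j - w' j \<in> MM n" unfolding S_def by blast
  have A: "\<forall>j<k. (v + v') j - (\<lambda>j. w j + w' j) j \<in> MM n"
  proof (intro allI impI)
    fix j assume "j < k"
    then have "(v j - w j) + (v' j - w' j) \<in> MM n" using h(5,6) MM_add by blast
    then show "(v + v') j - (\<lambda>j. w j + w' j) j \<in> MM n" by (simp add: algebra_simps)
  qed
  have B: "\<forall>j\<ge>k. (v + v') j = 0" using h(1,2) by simp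
  show "v + v' \<in> S n i" unfolding S_def
    by (rule CollectI, rule conjI, rule B, rule bexI[OF _ T_add[OF h(3,4)]], rule A)
next
  fix c v assume "v \<in> S n i"
  then obtain w where h: "\<forall>j\<ge>k. v j = 0" "w \<in> T i" "\<forall>j<k. v j - w j \<in> MM n" unfolding S_def by blast
  have A: "\<forall>j<k. sf c v j - (\<lambda>j. c *s w j) j \<in> MM n"
  proof (intro allI impI)
    fix j assume "j < k"
    then have "c *s (v j - w j) \<in> MM n" using h(3) MM_scale by blast
    then show "sf c v j - (\<lambda>j. c *s w j) j \<in> MM n" by (simp add: scale_right_diff_distrib)
  qed
  have B: "\<forall>j\<ge>k. sf c v j = 0" using h(1) by simp
  show "sf c v \<in> S n i" unfolding S_def
    by (rule CollectI, rule conjI, rule B, rule bexI[OF _ T_scale[OF h(2)]], rule A)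
qed

lemma S_chain: "chainU (S n)"
  unfolding chainU_def
proof (rule disjI2, intro allI subsetI)
  fix i v assume "v \<in> S n (Suc i)"
  then obtain w where h: "\<forall>j\<ge>k. v j = 0" "w \<in> T (Suc i)" "\<forall>j<k. v j - w j \<in> MM n" unfolding S_def by blast
  have "w \<in> T i" using T_anti[of i "Suc i"] h(2) by auto
  then show "v \<in> S n i" unfolding S_def using h(1,3) by blast
qed

lemma S_low: "mP sf (ideal_pow m n) PP \<subseteq> S n i"
proof
  fix v assume v: "v \<in> mP sf (ideal_pow m n) PP"
  have vP: "v \<in> PP" using module.mP_sub[OF module_sf PP_sub] v by blast
  have sub: "module.subspace sf {v. \<forall>j. v j \<in> MM n}"
    unfolding module.subspace_def[OF module_sf] using MM_zero MM_add MM_scale by simp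
  have gens: "{sf a x |a x. a \<in> ideal_pow m n \<and> x \<in> PP} \<subseteq> {v. \<forall>j. v j \<in> MM n}"
    using gen_MM by blast
  have "v \<in> module.span sf {sf a x |a x. a \<in> ideal_pow m n \<and> x \<in> PP}" using v unfolding mP_def .
  then have vj: "\<forall>j. v j \<in> MM n" using module.span_minimal[OF module_sf gens sub] by blast
  have A: "\<forall>j<k. v j - (\<lambda>j. 0) j \<in> MM n" using vj by simp
  have B: "\<forall>j\<ge>k. v j = 0" using vP unfolding PP_def by simp
  show "v \<in> S n i" unfolding S_def
    by (rule CollectI, rule conjI, rule B, rule bexI[OF _ T_zero], rule A)
qed

lemma S_up: "S n i \<subseteq> PP"
  unfolding S_def PP_def by blast

lemma S_ev: "evconst (S n)"
  by (rule module.level[OF module_sf mx noeth finite_Fp S_chain S_sub]) (use S_low S_up PP_span in auto)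

lemma red_mono:
  assumes n1: "1 \<le> n" and nj: "n \<le> j" and SS: "S n i \<subseteq> S n j"
  shows "red_image scale m i n \<subseteq> red_image scale m j n"
proof
  fix h assume "h \<in> red_image scale m i n"
  from dir1[OF this] have h: "h \<in> AutM scale m n" and "\<exists>w\<in>T i. \<forall>l<k. h (cs n (e l)) = cs n (w l)" by auto
  then obtain w where w: "w \<in> T i" and hw: "\<forall>l<k. h (cs n (e l)) = cs n (w l)" by blast
  define v where "v l = (if l < k then w l else 0)" for l
  have A: "\<forall>l<k. v l - w l \<in> MM n" unfolding v_def using MM_zero by simp
  have B: "\<forall>l\<ge>k. v l = 0" unfolding v_def by simp
  have "v \<in> S n i" unfolding S_def by (rule CollectI, rule conjI, rule B, rule bexI[OF _ w], rule A)
  then have "v \<in> S n j" using SS by blast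
  then obtain w' where w': "w' \<in> T j" "\<forall>l<k. v l - w' l \<in> MM n" unfolding S_def by blast
  have "\<forall>l<k. h (cs n (e l)) = cs n (w' l)"
  proof (intro allI impI)
    fix l assume l: "l < k"
    then have "w l - w' l \<in> MM n" using w'(2) unfolding v_def by simp
    then have "cs n (w l) = cs n (w' l)" unfolding cos_eq .
    then show "h (cs n (e l)) = cs n (w' l)" using hw l by simp
  qed
  then show "h \<in> red_image scale m j n" by (rule dir2[OF n1 nj h w'(1)])
qed

lemma main_loc:
  assumes n1: "1 \<le> n"
  shows "\<exists>N\<ge>n. \<forall>i j. N \<le> i \<and> N \<le> j \<longrightarrow> red_image scale m i n = red_image scale m j n"
proof -
  obtain N0 where N0: "\<forall>t\<ge>N0. S n t = S n N0" using S_ev unfolding evconst_def by blast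
  define N where "N = max n N0"
  have "\<forall>i j. N \<le> i \<and> N \<le> j \<longrightarrow> red_image scale m i n = red_image scale m j n"
  proof (intro allI impI)
    fix i j assume ij: "N \<le> i \<and> N \<le> j"
    then have le: "N0 \<le> i" "N0 \<le> j" "n \<le> i" "n \<le> j" unfolding N_def by auto
    have eq: "S n i = S n j" using N0[rule_format, OF le(1)] N0[rule_format, OF le(2)] by (rule trans[OF _ sym])
    have a: "red_image scale m i n \<subseteq> red_image scale m j n" by (rule red_mono[OF n1 le(4)]) (simp add: eq)
    have b: "red_image scale m j n \<subseteq> red_image scale m i n" by (rule red_mono[OF n1 le(3)]) (simp add: eq)
    show "red_image scale m i n = red_image scale m j n" using a b by (rule subset_antisym)
  qed
  moreover have "n \<le> N" unfolding N_def by simp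
  ultimately show ?thesis by blast
qed

end

theorem mainTheorem16:
  fixes m :: "'a::comm_ring_1 set"
    and s :: "'a \<Rightarrow> 'b::ab_group_add \<Rightarrow> 'b"
  assumes "noetherian_ring TYPE('a)"
    and "local_ring_with m"
    and "adically_complete m"
    and "module s"
    and "fin_gen_module s"
  shows "\<forall>n\<ge>1. \<exists>N\<ge>n. \<forall>i j. N \<le> i \<and> N \<le> j \<longrightarrow> red_image s m i n = red_image s m j n"
proof -
  obtain F where F: "finite F" "submod_gen s F = UNIV" using assms(5) unfolding fin_gen_module_def by blast
  have "\<exists>(n::nat) f. F = f ` {i. i < n}" using F(1) by (rule iffD1[OF finite_conv_nat_seg_image])
  then obtain k :: nat and e :: "nat \<Rightarrow> 'b" where ke: "F = e ` {i. i < k}" by blast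
  have sg: "submod_gen s F = module.span s F"
    unfolding submod_gen_def by (simp add: module.span_explicit[OF assms(4)])
  have Fe: "F = e ` {..<k}" using ke by (simp only: lessThan_def)
  have gen0: "module.span s F = UNIV" using F(2) unfolding sg .
  have gen: "module.span s (e ` {..<k}) = UNIV" using gen0 unfolding Fe .
  have mx: "maximal_ideal m" using assms(2) unfolding local_ring_with_def by simp
  have loc: "mlset s m k e" unfolding mlset_def mlset_axioms_def using assms(4) gen mx assms(1) by blast
  show ?thesis using mlset.main_loc[OF loc] by blast
qed

end
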